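(* For all integers $m,n\ge1$ there exist a Heyting algebra $H$ and monotone polynomials $f,g:H\to H$ such that $\mu.f=f^n(\bot)$, $\mu.g=g^m(\bot)$, $\mu.(f\wedge g)=(f\wedge g)^{m+n-1}(\bot)$ and $(f\wedge g)^{m+n-2}(\bot)\neq(f\wedge g)^{m+n-1}(\bot)$.
   Context: A function $f:H\to H$ is a polynomial if there exist an IPC formula $\phi$, a variable $x$ and a valuation $v$ in $H$ of the other variables of $\phi$ such that $f(h)=[\![\phi]\!]_{(v,h/x)}$ for all $h$. $f\wedge g$ is the pointwise meet; $\mu$ denotes least fixed point. *)

theory Defs
  imports Main
begin

record 'a heyting =
  carrier :: "'a set"
  hle :: "'a \<Rightarrow> 'a \<Rightarrow> bool"
  hmeet :: "'a \<Rightarrow> 'a \<Rightarrow> 'a"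
  hjoin :: "'a \<Rightarrow> 'a \<Rightarrow> 'a"
  himp :: "'a \<Rightarrow> 'a \<Rightarrow> 'a"
  hbot :: 'a
  htop :: 'a

definition heyting_algebra :: "'a heyting \<Rightarrow> bool" where
  "heyting_algebra H \<longleftrightarrow>
     (\<forall>x\<in>carrier H. hle H x x) \<and>
     (\<forall>x\<in>carrier H. \<forall>y\<in>carrier H. hle H x y \<and> hle H y x \<longrightarrow> x = y) \<and>
     (\<forall>x\<in>carrier H. \<forall>y\<in>carrier H. \<forall>z\<in>carrier H. hle H x y \<and> hle H y z \<longrightarrow> hle H x z) \<and>
     hbot H \<in> carrier H \<and> htop H \<in> carrier H \<and>
     (\<forall>x\<in>carrier H. \<forall>y\<in>carrier H.
        hmeet H x y \<in> carrier H \<and> hjoin H x y \<in> carrier H \<and> himp H x y \<in> carrier H) \<and>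
     (\<forall>x\<in>carrier H. \<forall>y\<in>carrier H. \<forall>z\<in>carrier H.
        hle H z (hmeet H x y) \<longleftrightarrow> hle H z x \<and> hle H z y) \<and>
     (\<forall>x\<in>carrier H. \<forall>y\<in>carrier H. \<forall>z\<in>carrier H.
        hle H (hjoin H x y) z \<longleftrightarrow> hle H x z \<and> hle H y z) \<and>
     (\<forall>x\<in>carrier H. hle H (hbot H) x \<and> hle H x (htop H)) \<and>
     (\<forall>x\<in>carrier H. \<forall>y\<in>carrier H. \<forall>z\<in>carrier H.
        hle H z (himp H x y) \<longleftrightarrow> hle H (hmeet H z x) y)"

datatype ipc = PVar nat | PBot | PTop | PAnd ipc ipc | POr ipc ipc | PImp ipc ipc

fun ipc_eval :: "'a heyting \<Rightarrow> (nat \<Rightarrow> 'a) \<Rightarrow> ipc \<Rightarrow> 'a" where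
  "ipc_eval H v (PVar i) = v i"
| "ipc_eval H v PBot = hbot H"
| "ipc_eval H v PTop = htop H"
| "ipc_eval H v (PAnd a b) = hmeet H (ipc_eval H v a) (ipc_eval H v b)"
| "ipc_eval H v (POr a b) = hjoin H (ipc_eval H v a) (ipc_eval H v b)"
| "ipc_eval H v (PImp a b) = himp H (ipc_eval H v a) (ipc_eval H v b)"

definition polynomial :: "'a heyting \<Rightarrow> ('a \<Rightarrow> 'a) \<Rightarrow> bool" where
  "polynomial H f \<longleftrightarrow>
     (\<exists>\<phi> x v. (\<forall>i. v i \<in> carrier H) \<and>
        (\<forall>h\<in>carrier H. f h = ipc_eval H (v(x := h)) \<phi>))"

definition hmono :: "'a heyting \<Rightarrow> ('a \<Rightarrow> 'a) \<Rightarrow> bool" where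
  "hmono H f \<longleftrightarrow> (\<forall>a\<in>carrier H. \<forall>b\<in>carrier H. hle H a b \<longrightarrow> hle H (f a) (f b))"

definition is_lfp :: "'a heyting \<Rightarrow> ('a \<Rightarrow> 'a) \<Rightarrow> 'a \<Rightarrow> bool" where
  "is_lfp H f a \<longleftrightarrow> a \<in> carrier H \<and> f a = a \<and> (\<forall>b\<in>carrier H. f b = b \<longrightarrow> hle H a b)"

definition pmeet :: "'a heyting \<Rightarrow> ('a \<Rightarrow> 'a) \<Rightarrow> ('a \<Rightarrow> 'a) \<Rightarrow> 'a \<Rightarrow> 'a" where
  "pmeet H f g = (\<lambda>h. hmeet H (f h) (g h))"

end

theory Submission
  imports Defs
begin

definition HH :: "nat \<Rightarrow> nat heyting" where
  "HH N = \<lparr>carrier = {..N}, hle = (\<le>), hmeet = min, hjoin = max,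
      himp = (\<lambda>x y. if x \<le> y then N else y), hbot = 0, htop = N\<rparr>"

definition val :: "nat \<Rightarrow> nat \<Rightarrow> nat" where
  "val N i = min (i - 1) N"

definition pk :: "nat \<Rightarrow> ipc" where
  "pk k = PImp (PImp (PVar 0) (PVar k)) (PVar (Suc k))"

fun cr :: "nat \<Rightarrow> nat \<Rightarrow> ipc" where
  "cr a 0 = PTop"
| "cr a (Suc b) = (if a \<le> b then PAnd (cr a b) (pk b) else PTop)"

definition cf :: "nat \<Rightarrow> nat \<Rightarrow> nat \<Rightarrow> nat \<Rightarrow> nat" where
  "cf N a b h = (if a < b then (if h < a then a else if h + 1 < b then h + 1 else N) else N)"

lemma HH_ha: "heyting_algebra (HH N)"
  unfolding heyting_algebra_def HH_def by auto

lemma eval_pk: "1 \<le> k \<Longrightarrow> Suc k \<le> N \<Longrightarrow> h \<le> N \<Longrightarrow>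
  ipc_eval (HH N) ((val N)(0 := h)) (pk k) = (if h < k then k else N)"
  by (auto simp: pk_def HH_def val_def)

lemma eval_cr: "1 \<le> a \<Longrightarrow> b \<le> N \<Longrightarrow> h \<le> N \<Longrightarrow>
  ipc_eval (HH N) ((val N)(0 := h)) (cr a b) = cf N a b h"
proof (induction b)
  case 0
  then show ?case by (simp add: HH_def cf_def)
next
  case (Suc b)
  show ?case
  proof (cases "a \<le> b")
    case True
    have ih: "ipc_eval (HH N) ((val N)(0 := h)) (cr a b) = cf N a b h" using Suc.prems by (intro Suc.IH) auto
    have pkv: "ipc_eval (HH N) ((val N)(0 := h)) (pk b) = (if h < b then b else N)"
      using Suc True eval_pk[of b N h] by simp
    have "ipc_eval (HH N) ((val N)(0 := h)) (cr a (Suc b)) =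
       hmeet (HH N) (ipc_eval (HH N) ((val N)(0 := h)) (cr a b)) (ipc_eval (HH N) ((val N)(0 := h)) (pk b))"
      using True by (simp del: fun_upd_apply)
    then have "ipc_eval (HH N) ((val N)(0 := h)) (cr a (Suc b)) =
       min (cf N a b h) (if h < b then b else N)"
      unfolding ih pkv by (simp add: HH_def)
    also have "\<dots> = cf N a (Suc b) h" using Suc True by (auto simp: cf_def)
    finally show ?thesis .
  next
    case False
    then show ?thesis by (simp add: HH_def cf_def)
  qed
qed

lemma iter1:
  assumes F: "\<And>h. h \<le> N \<Longrightarrow> F h = (if h + 1 < b then h + 1 else N)" and b: "b \<le> N"
  shows "j < b \<Longrightarrow> (F ^^ j) 0 = j"
proof (induction j)
  case 0 then show ?case by simp
next
  case (Suc j) then show ?case using F[of j] b by simp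
qed

lemma iter1b:
  assumes F: "\<And>h. h \<le> N \<Longrightarrow> F h = (if h + 1 < b then h + 1 else N)" and b: "b \<le> N" "1 \<le> b"
  shows "(F ^^ b) 0 = N"
proof -
  obtain c where c: "b = Suc c" using b by (cases b) auto
  have "(F ^^ c) 0 = c" using iter1[OF F b(1), of c] c by simp
  then show ?thesis using c F[of c] b by simp
qed

lemma iter2:
  assumes G: "\<And>h. h \<le> N \<Longrightarrow> G h = cf N n N h" and N: "N = m + n - 1" "1 \<le> n" "1 \<le> m"
  shows "j < m \<Longrightarrow> (G ^^ Suc j) 0 = n + j"
proof (induction j)
  case 0 then show ?case using G[of 0] N by (auto simp: cf_def)
next
  case (Suc j) then show ?case using G[of "n + j"] N by (auto simp: cf_def)
qed

lemma iter2b: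
  assumes G: "\<And>h. h \<le> N \<Longrightarrow> G h = cf N n N h" and N: "N = m + n - 1" "1 \<le> n" "1 \<le> m"
  shows "(G ^^ m) 0 = N"
proof (cases m)
  case 0 then show ?thesis using N by simp
next
  case (Suc k)
  show ?thesis
  proof (cases k)
    case 0 then show ?thesis using Suc G[of 0] N by (simp add: cf_def)
  next
    case (Suc k')
    have "(G ^^ Suc k') 0 = n + k'" using iter2[OF G N, of k'] Suc \<open>m = Suc k\<close> by simp
    then show ?thesis using Suc \<open>m = Suc k\<close> G[of "n + k'"] N by (simp add: cf_def)
  qed
qed

theorem mainTheorem19:
  fixes m n :: nat
  assumes "m \<ge> 1" and "n \<ge> 1"
  shows "\<exists>(H :: nat heyting) f g.
           heyting_algebra H \<and>
           polynomial H f \<and> polynomial H g \<and> hmono H f \<and> hmono H g \<and>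
           is_lfp H f ((f ^^ n) (hbot H)) \<and>
           is_lfp H g ((g ^^ m) (hbot H)) \<and>
           is_lfp H (pmeet H f g) ((pmeet H f g ^^ (m + n - 1)) (hbot H)) \<and>
           (pmeet H f g ^^ (m + n - 2)) (hbot H) \<noteq> (pmeet H f g ^^ (m + n - 1)) (hbot H)"
proof -
  define N where "N = m + n - 1"
  define H where "H = HH N"
  define f where "f = (\<lambda>h. ipc_eval H ((val N)(0 := h)) (cr 1 n))"
  define g where "g = (\<lambda>h. ipc_eval H ((val N)(0 := h)) (cr n N))"
  have car: "carrier H = {..N}" "hle H = (\<le>)" "hbot H = 0" by (simp_all add: H_def HH_def)
  have fc: "\<And>h. h \<le> N \<Longrightarrow> f h = (if h + 1 < n then h + 1 else N)"
    unfolding f_def H_def using assms N_def by (subst eval_cr) (auto simp: cf_def)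
  have gc: "\<And>h. h \<le> N \<Longrightarrow> g h = cf N n N h"
    unfolding g_def H_def using assms N_def by (subst eval_cr) auto
  have mc: "\<And>h. h \<le> N \<Longrightarrow> pmeet H f g h = (if h + 1 < N then h + 1 else N)"
    using fc gc assms N_def by (auto simp: pmeet_def H_def HH_def cf_def)
  have vc: "\<forall>i. val N i \<in> carrier H" by (auto simp: car val_def)
  have pf: "polynomial H f" unfolding polynomial_def f_def using vc by blast
  have pg: "polynomial H g" unfolding polynomial_def g_def using vc by blast
  have mf: "hmono H f" unfolding hmono_def car using fc N_def assms by auto
  have mg: "hmono H g" unfolding hmono_def car using gc N_def assms by (auto simp: cf_def)
  have fn: "(f ^^ n) 0 = N" using iter1b[OF fc] assms N_def by simp
  have gm: "(g ^^ m) 0 = N" using iter2b[OF gc N_def] assms by simp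
  have mN: "(pmeet H f g ^^ N) 0 = N" using iter1b[OF mc] assms N_def by simp
  have mN1: "(pmeet H f g ^^ (N - 1)) 0 = N - 1" using iter1[OF mc] assms N_def by simp
  have lf: "is_lfp H f N" unfolding is_lfp_def car using fc N_def assms by auto
  have lg: "is_lfp H g N" unfolding is_lfp_def car using gc N_def assms by (auto simp: cf_def)
  have lm: "is_lfp H (pmeet H f g) N" unfolding is_lfp_def car using mc N_def assms by auto
  have N1: "m + n - 2 = N - 1" and N2: "m + n - 1 = N" and N3: "N - 1 \<noteq> N" using N_def assms by auto
  have "heyting_algebra H \<and>
           polynomial H f \<and> polynomial H g \<and> hmono H f \<and> hmono H g \<and>
           is_lfp H f ((f ^^ n) (hbot H)) \<and>
           is_lfp H g ((g ^^ m) (hbot H)) \<and>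
           is_lfp H (pmeet H f g) ((pmeet H f g ^^ (m + n - 1)) (hbot H)) \<and>
           (pmeet H f g ^^ (m + n - 2)) (hbot H) \<noteq> (pmeet H f g ^^ (m + n - 1)) (hbot H)"
    using HH_ha[of N, folded H_def] pf pg mf mg lf lg lm fn gm mN mN1 N1 N2 N3 unfolding car(3) H_def[symmetric] by simp
  then show ?thesis by blast
qed

end
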